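(* Let $q$ be an odd prime power and $s=(q-1)/2$. Let $r_0,r_1$ be positive integers such that $s\mid r_0^2-1$ and $2s\mid r_1^2-1$. Then $$f(x)=\tfrac12 x^{r_0}(1+x^s)+\tfrac12 x^{r_1}(1-x^s)$$ is a permutation polynomial of $\mathbb{F}_q$ and is self-inverse, i.e. $f(f(c))=c$ for all $c\in\mathbb{F}_q$.
   Context: A polynomial $f\in\mathbb{F}_q[x]$ is a permutation polynomial of $\mathbb{F}_q$ if it induces a bijection of $\mathbb{F}_q$. *)

theory Defs
  imports "HOL-Computational_Algebra.Polynomial"
begin

definition permutation_polynomial :: "'a::field poly \<Rightarrow> bool" where
  "permutation_polynomial p \<longleftrightarrow> bij (poly p)"

end

theory Submission
  imports Defs "HOL-Computational_Algebra.Primes"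
begin

lemma ff_pow_card1:
  fixes x :: "'a :: {finite,field}"
  assumes "x \<noteq> 0"
  shows "x ^ (card (UNIV :: 'a set) - 1) = 1"
proof -
  have "(\<Prod>y\<in>UNIV-{0}. x * y) = x ^ (card (UNIV :: 'a set) - 1) * \<Prod>(UNIV-{0})"
    by (simp add: prod.distrib mult_ac)
  also have "(\<Prod>y\<in>UNIV-{0}. x * y) = (\<Prod>y\<in>UNIV-{0}. y)"
    by (rule prod.reindex_bij_witness[of _ "\<lambda>y. y / x" "\<lambda>y. x * y"]) (use assms in auto)
  finally have "1 * \<Prod>(UNIV-{0::'a}) = x ^ (card (UNIV :: 'a set) - 1) * \<Prod>(UNIV-{0})" by simp
  moreover have "\<Prod>(UNIV-{0::'a}) \<noteq> 0" by simp
  ultimately show ?thesis by (metis mult_right_cancel)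
qed

lemma card_zero_in:
  "of_nat (card (UNIV :: 'a :: {finite,ring_1} set)) = (0::'a)"
proof -
  have "(\<Sum>x\<in>(UNIV::'a set). x + 1) = (\<Sum>x\<in>UNIV. x)"
    by (rule sum.reindex_bij_witness[of _ "\<lambda>y. y - 1" "\<lambda>y. y + 1"]) auto
  then show ?thesis by (simp add: sum.distrib)
qed

lemma two_nz:
  assumes "odd (card (UNIV :: 'a :: {finite,field} set))"
  shows "(2::'a) \<noteq> 0"
proof
  assume h: "(2::'a) = 0"
  have "CHAR('a) dvd 2" using h of_nat_eq_0_iff_char_dvd[of 2, where 'a='a] by simp
  moreover have "CHAR('a) \<noteq> Suc 0" by simp
  moreover have "CHAR('a) \<noteq> 0" using \<open>CHAR('a) dvd 2\<close> by (metis dvd_0_left_iff zero_neq_numeral)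
  moreover have "CHAR('a) \<le> 2" using dvd_imp_le[of "CHAR('a)" 2] \<open>CHAR('a) dvd 2\<close> by simp
  ultimately have "CHAR('a) = 2" by arith
  moreover have "CHAR('a) dvd card (UNIV :: 'a set)"
    using card_zero_in[where 'a='a] of_nat_eq_0_iff_char_dvd by blast
  ultimately show False using assms by simp
qed

theorem corollary4p2:
  fixes r0 r1 :: nat and f :: "'a::{finite,field} poly"
  assumes "odd (card (UNIV :: 'a set))"
    and "r0 > 0" and "r1 > 0"
    and "(card (UNIV :: 'a set) - 1) div 2 dvd r0^2 - 1"
    and "2 * ((card (UNIV :: 'a set) - 1) div 2) dvd r1^2 - 1"
    and "f = smult (inverse 2) (monom 1 r0 * (1 + monom 1 ((card (UNIV :: 'a set) - 1) div 2)))
           + smult (inverse 2) (monom 1 r1 * (1 - monom 1 ((card (UNIV :: 'a set) - 1) div 2)))"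
  shows "permutation_polynomial f \<and> (\<forall>c. poly f (poly f c) = c)"
proof -
  define q where "q = card (UNIV :: 'a set)"
  define s where "s = (q - 1) div 2"
  have ev: "even (q - 1)" using assms(1) unfolding q_def by simp
  then have qs: "q - 1 = 2 * s" unfolding s_def by simp
  have two: "(2::'a) \<noteq> 0" using two_nz assms(1) .
  have pf: "poly f c = inverse 2 * (c ^ r0 * (1 + c ^ s)) + inverse 2 * (c ^ r1 * (1 - c ^ s))" for c
    using assms(6) unfolding s_def q_def by (simp add: poly_monom)
  have sq: "(c ^ s) ^ 2 = 1" if "c \<noteq> 0" for c :: 'a
    using ff_pow_card1[OF that] qs unfolding q_def by (simp add: power_mult[symmetric] mult.commute)
  have pm: "c ^ s = 1 \<or> c ^ s = -1" if "c \<noteq> 0" for c :: 'a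
    using sq[OF that] power2_eq_1_iff by blast
  have pc: "c ^ (q - 1) = 1" if "c \<noteq> 0" for c :: 'a
    using ff_pow_card1[OF that] unfolding q_def .
  have f1: "poly f c = c ^ r0" if "c ^ s = 1" for c
    using that two by (simp add: pf field_simps)
  have f2: "poly f c = c ^ r1" if "c ^ s = -1" for c
    using that two by (simp add: pf field_simps)
  have f0: "poly f 0 = 0" using assms(2,3) by (simp add: pf power_0_left)
  have spos: "s > 0"
  proof (rule ccontr)
    assume "\<not> s > 0"
    then have "q \<le> 1" using qs by simp
    moreover have "card {0::'a, 1} = 2" by simp
    moreover have "card {0::'a, 1} \<le> q" unfolding q_def by (rule card_mono) auto
    ultimately show False by simp
  qed
  have r1odd: "odd r1"
  proof
    assume "even r1"
    then obtain m where m: "r1 = 2 * m" by blast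
    have "2 dvd 2 * s" by simp
    have d: "2 dvd r1^2 - 1" using assms(5) unfolding q_def[symmetric] s_def[symmetric]
      using dvd_trans[OF \<open>2 dvd 2 * s\<close>] by blast
    have "r1^2 = 4 * (m*m)" using m by (simp add: power2_eq_square)
    moreover have "m * m > 0" using m assms(3) by simp
    ultimately show False using d by presburger
  qed
  have inv: "poly f (poly f c) = c" for c
  proof (cases "c = 0")
    case True then show ?thesis by (simp add: f0)
  next
    case False
    from pm[OF False] show ?thesis
    proof
      assume h: "c ^ s = 1"
      have e0: "(c ^ r0) ^ s = (c ^ s) ^ r0" by (simp only: power_mult[symmetric] mult.commute)
      have e: "(c ^ r0) ^ s = 1" using h e0 by simp
      obtain k where k: "r0^2 - 1 = s * k" using assms(4) unfolding q_def[symmetric] s_def[symmetric] by blast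
      have "r0^2 = Suc (s * k)" using k assms(2) by (metis Suc_pred' zero_less_power)
      then have "c ^ (r0*r0) = c" using h by (simp add: power_mult power2_eq_square)
      moreover have "poly f (poly f c) = (c ^ r0) ^ r0" using f1[OF h] f1[OF e] by simp
      ultimately show ?thesis by (simp add: power_mult)
    next
      assume h: "c ^ s = -1"
      have e0: "(c ^ r1) ^ s = (c ^ s) ^ r1" by (simp only: power_mult[symmetric] mult.commute)
      have e: "(c ^ r1) ^ s = -1" using h e0 r1odd by simp
      obtain k where k: "r1^2 - 1 = 2 * s * k" using assms(5) unfolding q_def[symmetric] s_def[symmetric] by blast
      have r: "r1*r1 = Suc (2 * s * k)" using k assms(3) by (metis Suc_pred' zero_less_power power2_eq_square)
      have c2: "c ^ (2 * s) = 1" using pc[OF False] qs by simp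
      have "c ^ (r1*r1) = c * (c ^ (2 * s)) ^ k" unfolding r by (simp add: power_mult)
      then have "c ^ (r1*r1) = c" using c2 by simp
      moreover have "poly f (poly f c) = (c ^ r1) ^ r1" using f2[OF h] f2[OF e] by simp
      ultimately show ?thesis by (simp add: power_mult)
    qed
  qed
  then show ?thesis unfolding permutation_polynomial_def by (auto intro: involuntory_imp_bij)
qed

end
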